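(* Let $V$ be an $n$-dimensional vector space over a field of characteristic zero, and let $A^{a_1\dots a_p}$ and $B_{a_1\dots a_p}$ be $p$-forms with $A$ simple. Let $P^a{}_b=A^{ac_2\dots c_p}B_{bc_2\dots c_p}$ and $T=T^a{}_b\{A,B\}=P-\frac{1}{2p}[P]$. Then $$T^2=\frac{1}{(2p)^2}[P]^2,$$ which, if $n\neq 2p$, can be written as $$T^2=\frac{1}{(n-2p)^2}[T]^2.$$
   Context: Index-free notation for $(1,1)$-tensors: products denote composition, $[X]=X^c{}_c$ is the trace, and a scalar term is understood as multiplied by the identity $\delta^a_b$. Thus $T^a{}_b\{A,B\}=A^{ac_2\dots c_p}B_{bc_2\dots c_p}-\frac{1}{2p}A^{c_1\dots c_p}B_{c_1\dots c_p}\delta^a_b$ (the "superenergy tensor" of $A,B$). A $p$-form $A$ is simple if $A^{a_1\dots a_p}=u^{[a_1}\cdots w^{a_p]}$ for some vectors $u,\dots,w$. No metric is assumed. *)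

theory Defs
  imports Main "HOL-Combinatorics.Permutations"
begin

text \<open>Tensors on an n-dimensional space V are represented by their components
  with respect to a fixed basis of V (and the dual basis of V*).\<close>

definition idx :: "nat \<Rightarrow> nat \<Rightarrow> nat list set" where
  "idx n p = {is. length is = p \<and> set is \<subseteq> {..<n}}"

definition is_pform :: "nat \<Rightarrow> nat \<Rightarrow> (nat list \<Rightarrow> 'k::field) \<Rightarrow> bool" where
  "is_pform n p A \<longleftrightarrow>
     (\<forall>is \<in> idx n p. \<forall>\<sigma>. \<sigma> permutes {..<p} \<longrightarrow>
        A (map (\<lambda>k. is ! \<sigma> k) [0..<p]) = of_int (sign \<sigma>) * A is)"

text \<open>A is simple: A^{a1..ap} = u_1^{[a1} ... u_p^{ap]} for vectors u_1..u_p
  (u j i is the i-th component of the j-th vector), with the antisymmetrisation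
  normalised by 1/p!.\<close>
definition simple_pform :: "nat \<Rightarrow> nat \<Rightarrow> (nat list \<Rightarrow> 'k::field_char_0) \<Rightarrow> bool" where
  "simple_pform n p A \<longleftrightarrow>
     (\<exists>u :: nat \<Rightarrow> nat \<Rightarrow> 'k. \<forall>is \<in> idx n p.
        A is = (1 / of_nat (fact p)) *
          (\<Sum>\<sigma> \<in> {\<sigma>. \<sigma> permutes {..<p}}. of_int (sign \<sigma>) * (\<Prod>k<p. u (\<sigma> k) (is ! k))))"

definition Pten :: "nat \<Rightarrow> nat \<Rightarrow> (nat list \<Rightarrow> 'k::field) \<Rightarrow> (nat list \<Rightarrow> 'k) \<Rightarrow> nat \<Rightarrow> nat \<Rightarrow> 'k" where
  "Pten n p A B a b = (\<Sum>cs \<in> idx n (p - 1). A (a # cs) * B (b # cs))"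

definition tr :: "nat \<Rightarrow> (nat \<Rightarrow> nat \<Rightarrow> 'k::field) \<Rightarrow> 'k" where
  "tr n X = (\<Sum>c<n. X c c)"

definition delta :: "nat \<Rightarrow> nat \<Rightarrow> 'k::field" where
  "delta a b = (if a = b then 1 else 0)"

definition comp :: "nat \<Rightarrow> (nat \<Rightarrow> nat \<Rightarrow> 'k::field) \<Rightarrow> (nat \<Rightarrow> nat \<Rightarrow> 'k) \<Rightarrow> nat \<Rightarrow> nat \<Rightarrow> 'k" where
  "comp n X Y a b = (\<Sum>c<n. X a c * Y c b)"

definition Tten :: "nat \<Rightarrow> nat \<Rightarrow> (nat list \<Rightarrow> 'k::field) \<Rightarrow> (nat list \<Rightarrow> 'k) \<Rightarrow> nat \<Rightarrow> nat \<Rightarrow> 'k" where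
  "Tten n p A B a b = Pten n p A B a b - tr n (Pten n p A B) / (2 * of_nat p) * delta a b"

end

theory Submission
  imports Defs
begin

lemma finite_idx[simp]: "finite (idx n p)"
proof -
  have "idx n p = {xs. set xs \<subseteq> {..<n} \<and> length xs = p}" by (auto simp: idx_def)
  then show ?thesis using finite_lists_length_eq[of "{..<n}" p] by simp
qed

definition Mf :: "nat \<Rightarrow> nat \<Rightarrow> (nat list \<Rightarrow> 'k::field) \<Rightarrow> (nat \<Rightarrow> nat \<Rightarrow> 'k) \<Rightarrow> (nat \<Rightarrow> nat) \<Rightarrow> 'k" where
  "Mf n p B u \<tau> = (\<Sum>is \<in> idx n p. B is * (\<Prod>k<p. u (\<tau> k) (is ! k)))"

lemma reindex_idx:
  assumes rho: "\<rho> permutes {..<p}"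
  shows "(\<Sum>js \<in> idx n p. h (map (\<lambda>k. js ! \<rho> k) [0..<p])) = (\<Sum>is \<in> idx n p. (h is :: 'k::comm_monoid_add))"
proof (rule sum.reindex_bij_witness[where i="\<lambda>is. map (\<lambda>m. is ! inv \<rho> m) [0..<p]"
      and j="\<lambda>js. map (\<lambda>k. js ! \<rho> k) [0..<p]"])
  have r: "\<And>k. k < p \<Longrightarrow> \<rho> k < p" "\<And>k. k < p \<Longrightarrow> inv \<rho> k < p"
    using permutes_in_image[OF rho] permutes_in_image[OF permutes_inv[OF rho]] by auto
  fix a assume a: "a \<in> idx n p"
  then show "map (\<lambda>m. map (\<lambda>k. a ! \<rho> k) [0..<p] ! inv \<rho> m) [0..<p] = a"
    using r by (auto intro!: nth_equalityI simp: idx_def permutes_inverses[OF rho])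
  show "map (\<lambda>k. a ! \<rho> k) [0..<p] \<in> idx n p" using a r
    by (auto simp: idx_def) (metis lessThan_iff nth_mem subsetD)
  show "map (\<lambda>m. a ! inv \<rho> m) [0..<p] \<in> idx n p" using a r
    by (auto simp: idx_def) (metis lessThan_iff nth_mem subsetD)
  show "map (\<lambda>k. map (\<lambda>m. a ! inv \<rho> m) [0..<p] ! \<rho> k) [0..<p] = a"
    using a r by (auto intro!: nth_equalityI simp: idx_def permutes_inverses[OF rho])
qed simp

lemma M_perm:
  assumes B: "is_pform n p B" and rho: "\<rho> permutes {..<p}"
  shows "Mf n p B u (\<tau> \<circ> \<rho>) = of_int (sign \<rho>) * Mf n p B u \<tau>"
proof -
  have r: "\<And>k. k < p \<Longrightarrow> \<rho> k < p"
    using permutes_in_image[OF rho] by auto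
  have "of_int (sign \<rho>) * Mf n p B u \<tau> = (\<Sum>js \<in> idx n p. of_int (sign \<rho>) * B js * (\<Prod>k<p. u (\<tau> k) (js ! k)))"
    by (simp add: Mf_def sum_distrib_left mult.assoc)
  also have "\<dots> = (\<Sum>js \<in> idx n p. B (map (\<lambda>k. js ! \<rho> k) [0..<p]) *
        (\<Prod>k<p. u (\<tau> (\<rho> k)) ((map (\<lambda>k. js ! \<rho> k) [0..<p]) ! k)))"
  proof (rule sum.cong[OF refl])
    fix js assume js: "js \<in> idx n p"
    have "(\<Prod>k<p. u (\<tau> k) (js ! k)) = (\<Prod>k<p. u (\<tau> (\<rho> k)) (js ! \<rho> k))"
      using prod.permute[OF rho, of "\<lambda>k. u (\<tau> k) (js ! k)"] by (simp add: o_def)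
    also have "\<dots> = (\<Prod>k<p. u (\<tau> (\<rho> k)) ((map (\<lambda>k. js ! \<rho> k) [0..<p]) ! k))"
      by (rule prod.cong) auto
    finally show "of_int (sign \<rho>) * B js * (\<Prod>k<p. u (\<tau> k) (js ! k)) = B (map (\<lambda>k. js ! \<rho> k) [0..<p]) *
        (\<Prod>k<p. u (\<tau> (\<rho> k)) ((map (\<lambda>k. js ! \<rho> k) [0..<p]) ! k))"
      using B js rho unfolding is_pform_def by auto
  qed
  also have "\<dots> = Mf n p B u (\<tau> \<circ> \<rho>)"
    unfolding Mf_def using reindex_idx[OF rho, where n=n and h="\<lambda>is. B is * (\<Prod>k<p. u (\<tau> (\<rho> k)) (is ! k))"]
    by simp
  finally show ?thesis by simp
qed

lemma M_noninj:
  assumes B: "is_pform n p B" and "i1 < p" "i2 < p" "i1 \<noteq> i2" "\<tau> i1 = \<tau> i2"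
  shows "Mf n p B u \<tau> = (0::'k::field_char_0)"
proof -
  have t: "\<tau> \<circ> transpose i1 i2 = \<tau>" using assms(5)
    by (auto simp: fun_eq_iff transpose_def)
  have "Mf n p B u \<tau> = - Mf n p B u \<tau>"
    using M_perm[OF B permutes_swap_id[of i1 "{..<p}" i2], of u \<tau>] assms(2-4)
    by (simp add: t sign_swap_id)
  then show ?thesis by simp
qed

lemma sum_idx_Suc:
  "(\<Sum>is \<in> idx n (Suc q). f is) = (\<Sum>c<n. \<Sum>cs \<in> idx n q. (f (c # cs) :: 'k::comm_monoid_add))"
proof -
  have "(\<Sum>is \<in> idx n (Suc q). f is) = (\<Sum>x \<in> {..<n} \<times> idx n q. f (fst x # snd x))"
  proof (rule sum.reindex_bij_witness[where i="\<lambda>x. fst x # snd x" and j="\<lambda>is. (hd is, tl is)"])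
    fix a assume a: "a \<in> idx n (Suc q)"
    then obtain c cs where "a = c # cs" by (cases a) (auto simp: idx_def)
    then show "fst (hd a, tl a) # snd (hd a, tl a) = a" by simp
    show "(hd a, tl a) \<in> {..<n} \<times> idx n q" using a \<open>a = c # cs\<close> by (auto simp: idx_def)
    show "f (fst (hd a, tl a) # snd (hd a, tl a)) = f a" using \<open>a = c # cs\<close> by simp
  next
    fix b assume "b \<in> {..<n} \<times> idx n q"
    then show "(hd (fst b # snd b), tl (fst b # snd b)) = b" "fst b # snd b \<in> idx n (Suc q)"
      by (auto simp: idx_def)
  qed
  also have "\<dots> = (\<Sum>c<n. \<Sum>cs \<in> idx n q. f (c # cs))"
    by (simp add: sum.cartesian_product case_prod_beta)
  finally show ?thesis .
qed

definition Rf :: "nat \<Rightarrow> nat \<Rightarrow> (nat list \<Rightarrow> 'k::field) \<Rightarrow> (nat \<Rightarrow> nat \<Rightarrow> 'k) \<Rightarrow> (nat \<Rightarrow> nat) \<Rightarrow> nat \<Rightarrow> 'k" where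
  "Rf n q B u \<tau> c = (\<Sum>cs \<in> idx n q. B (c # cs) * (\<Prod>k<q. u (\<tau> (Suc k)) (cs ! k)))"

lemma R_contract:
  "(\<Sum>c<n. u i c * Rf n q B u \<tau> c) = Mf n (Suc q) B u (\<tau>(0 := i))"
  unfolding Mf_def Rf_def sum_idx_Suc prod.lessThan_Suc_shift
  by (simp add: sum_distrib_left mult_ac)

definition Wf :: "nat \<Rightarrow> nat \<Rightarrow> (nat list \<Rightarrow> 'k::field) \<Rightarrow> (nat \<Rightarrow> nat \<Rightarrow> 'k) \<Rightarrow> nat \<Rightarrow> nat \<Rightarrow> 'k" where
  "Wf n q B u j c = (\<Sum>\<sigma> \<in> {\<sigma>. \<sigma> permutes {..<Suc q} \<and> \<sigma> 0 = j}. of_int (sign \<sigma>) * Rf n q B u \<sigma> c)"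

lemma P_decomp:
  assumes A: "\<forall>is \<in> idx n (Suc q).
        A is = (1 / of_nat (fact (Suc q))) *
          (\<Sum>\<sigma> \<in> {\<sigma>. \<sigma> permutes {..<Suc q} }. of_int (sign \<sigma>) * (\<Prod>k\<in>{..<Suc q}. u (\<sigma> k) (is ! k)))"
    and a: "a < n"
  shows "Pten n (Suc q) A B a c = (1 / of_nat (fact (Suc q))) * (\<Sum>j\<in>{..<Suc q}. u j a * Wf n q B u j c)"
proof -
  let ?S = "{\<sigma>. \<sigma> permutes {..<Suc q} }"
  have fin: "finite ?S" by (simp add: finite_permutations)
  have "Pten n (Suc q) A B a c = (\<Sum>cs \<in> idx n q. A (a # cs) * B (c # cs))"
    by (simp add: Pten_def)
  also have "\<dots> = (\<Sum>cs \<in> idx n q. (1 / of_nat (fact (Suc q))) *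
          (\<Sum>\<sigma> \<in> ?S. of_int (sign \<sigma>) * (u (\<sigma> 0) a * (\<Prod>k<q. u (\<sigma> (Suc k)) (cs ! k)))) * B (c # cs))"
  proof (rule sum.cong[OF refl])
    fix cs assume cs: "cs \<in> idx n q"
    then have "a # cs \<in> idx n (Suc q)" using a by (auto simp: idx_def)
    from A[rule_format, OF this] show "A (a # cs) * B (c # cs) = (1 / of_nat (fact (Suc q))) *
          (\<Sum>\<sigma> \<in> ?S. of_int (sign \<sigma>) * (u (\<sigma> 0) a * (\<Prod>k<q. u (\<sigma> (Suc k)) (cs ! k)))) * B (c # cs)"
      by (simp only: prod.lessThan_Suc_shift nth_Cons_0 nth_Cons_Suc)
  qed
  also have "\<dots> = (1 / of_nat (fact (Suc q))) * (\<Sum>\<sigma> \<in> ?S. of_int (sign \<sigma>) * u (\<sigma> 0) a * Rf n q B u \<sigma> c)"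
    unfolding Rf_def sum_distrib_left sum_distrib_right
    by (subst sum.swap) (simp add: mult_ac)
  also have "(\<Sum>\<sigma> \<in> ?S. of_int (sign \<sigma>) * u (\<sigma> 0) a * Rf n q B u \<sigma> c)
      = (\<Sum>j\<in>{..<Suc q}. \<Sum>\<sigma> \<in> {\<sigma> \<in> ?S. \<sigma> 0 = j}. of_int (sign \<sigma>) * u (\<sigma> 0) a * Rf n q B u \<sigma> c)"
    by (rule sum.group[symmetric]) (auto simp: fin, metis lessThan_iff permutes_in_image zero_less_Suc)
  also have "\<dots> = (\<Sum>j\<in>{..<Suc q}. u j a * Wf n q B u j c)"
    unfolding Wf_def sum_distrib_left
    by (intro sum.cong refl) (auto simp: mult_ac)
  finally show ?thesis .
qed

lemma card_Sj:
  assumes j: "j < Suc q"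
  shows "card {\<sigma>. \<sigma> permutes {..<Suc q} \<and> \<sigma> 0 = j} = card {\<sigma>. \<sigma> permutes {..<Suc q} \<and> \<sigma> 0 = 0}"
proof -
  have "bij_betw (\<lambda>\<sigma>. transpose 0 j \<circ> \<sigma>) {\<sigma>. \<sigma> permutes {..<Suc q} \<and> \<sigma> 0 = 0} {\<sigma>. \<sigma> permutes {..<Suc q} \<and> \<sigma> 0 = j}"
  proof (rule bij_betw_byWitness[where f'="\<lambda>\<sigma>. transpose 0 j \<circ> \<sigma>"])
    have t: "transpose 0 j permutes {..<Suc q}" using j by (intro permutes_swap_id) auto
    show "\<forall>a\<in>{\<sigma>. \<sigma> permutes {..<Suc q} \<and> \<sigma> 0 = 0}. transpose 0 j \<circ> (transpose 0 j \<circ> a) = a"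
      by (auto simp: fun_eq_iff)
    show "\<forall>a\<in>{\<sigma>. \<sigma> permutes {..<Suc q} \<and> \<sigma> 0 = j}. transpose 0 j \<circ> (transpose 0 j \<circ> a) = a"
      by (auto simp: fun_eq_iff)
    show "(\<lambda>\<sigma>. transpose 0 j \<circ> \<sigma>) ` {\<sigma>. \<sigma> permutes {..<Suc q} \<and> \<sigma> 0 = 0} \<subseteq> {\<sigma>. \<sigma> permutes {..<Suc q} \<and> \<sigma> 0 = j}"
      using t by (auto intro: permutes_compose)
    show "(\<lambda>\<sigma>. transpose 0 j \<circ> \<sigma>) ` {\<sigma>. \<sigma> permutes {..<Suc q} \<and> \<sigma> 0 = j} \<subseteq> {\<sigma>. \<sigma> permutes {..<Suc q} \<and> \<sigma> 0 = 0}"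
      using t by (auto intro: permutes_compose)
  qed
  then show ?thesis by (simp add: bij_betw_same_card)
qed

lemma W_contract:
  assumes B: "is_pform n (Suc q) B" and i: "i < Suc q" and j: "j < Suc q"
  shows "(\<Sum>c<n. u i c * Wf n q B u j c) = (if i = j then
      of_nat (card {\<sigma>. \<sigma> permutes {..<Suc q} \<and> \<sigma> 0 = 0}) * Mf n (Suc q) B u id else (0::'k::field_char_0))"
proof -
  let ?Sj = "{\<sigma>. \<sigma> permutes {..<Suc q} \<and> \<sigma> 0 = j}"
  have "(\<Sum>c<n. u i c * Wf n q B u j c) = (\<Sum>\<sigma> \<in> ?Sj. of_int (sign \<sigma>) * (\<Sum>c<n. u i c * Rf n q B u \<sigma> c))"
    unfolding Wf_def sum_distrib_left by (subst sum.swap) (simp add: mult_ac)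
  also have "\<dots> = (\<Sum>\<sigma> \<in> ?Sj. of_int (sign \<sigma>) * Mf n (Suc q) B u (\<sigma>(0 := i)))"
    by (simp add: R_contract)
  also have "\<dots> = (if i = j then
      of_nat (card {\<sigma>. \<sigma> permutes {..<Suc q} \<and> \<sigma> 0 = 0}) * Mf n (Suc q) B u id else 0)"
  proof (cases "i = j")
    case True
    have "(\<Sum>\<sigma> \<in> ?Sj. of_int (sign \<sigma>) * Mf n (Suc q) B u (\<sigma>(0 := i))) = (\<Sum>\<sigma> \<in> ?Sj. Mf n (Suc q) B u id)"
    proof (rule sum.cong[OF refl])
      fix \<sigma> assume s: "\<sigma> \<in> ?Sj"
      then have e: "\<sigma>(0 := i) = id \<circ> \<sigma>" using True by auto
      have ss: "of_int (sign \<sigma>) * (of_int (sign \<sigma>) :: 'k) = 1"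
        by (metis of_int_1 of_int_mult sign_idempotent)
      then show "of_int (sign \<sigma>) * Mf n (Suc q) B u (\<sigma>(0 := i)) = Mf n (Suc q) B u id"
      proof -
        have "Mf n (Suc q) B u (\<sigma>(0 := i)) = of_int (sign \<sigma>) * Mf n (Suc q) B u id"
          using M_perm[OF B, of \<sigma> u id] e s by simp
        then show ?thesis using ss by (simp add: mult.assoc[symmetric])
      qed
    qed
    also have "\<dots> = of_nat (card {\<sigma>. \<sigma> permutes {..<Suc q} \<and> \<sigma> 0 = 0}) * Mf n (Suc q) B u id"
      using card_Sj[OF j] by simp
    finally show ?thesis using True by simp
  next
    case False
    have "of_int (sign \<sigma>) * Mf n (Suc q) B u (\<sigma>(0 := i)) = 0" if s: "\<sigma> \<in> ?Sj" for \<sigma>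
    proof -
      have p: "\<sigma> permutes {..<Suc q}" and s0: "\<sigma> 0 = j" using s by auto
      define m where "m = inv \<sigma> i"
      have sm: "\<sigma> m = i" unfolding m_def by (rule permutes_inverses(1)[OF p])
      have m: "m < Suc q" using permutes_in_image[OF permutes_inv[OF p], of i] i by (simp add: m_def)
      have m0: "m \<noteq> 0" using sm s0 False by (cases m) auto
      have "Mf n (Suc q) B u (\<sigma>(0 := i)) = 0"
        by (rule M_noninj[OF B, of 0 m]) (use m m0 sm in simp_all)
      then show ?thesis by simp
    qed
    then show ?thesis using False by simp
  qed
  finally show ?thesis .
qed

lemma PP:
  fixes A B :: "nat list \<Rightarrow> 'k::field_char_0"
  assumes B: "is_pform n (Suc q) B"
    and A: "\<forall>is \<in> idx n (Suc q).
        A is = (1 / of_nat (fact (Suc q))) *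
          (\<Sum>\<sigma> \<in> {\<sigma>. \<sigma> permutes {..<Suc q} }. of_int (sign \<sigma>) * (\<Prod>k<Suc q. u (\<sigma> k) (is ! k)))"
    and a: "a < n"
  shows "comp n (Pten n (Suc q) A B) (Pten n (Suc q) A B) a b
     = tr n (Pten n (Suc q) A B) / of_nat (Suc q) * Pten n (Suc q) A B a b"
proof -
  define f :: 'k where "f = 1 / of_nat (fact (Suc q))"
  define G :: 'k where "G = of_nat (card {\<sigma>. \<sigma> permutes {..<Suc q} \<and> \<sigma> 0 = 0}) * Mf n (Suc q) B u id"
  define W where "W = Wf n q B u"
  have P: "\<And>x y. x < n \<Longrightarrow> Pten n (Suc q) A B x y = f * (\<Sum>j<Suc q. u j x * W j y)"
    unfolding f_def W_def by (rule P_decomp[OF A])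
  have D: "\<And>i j. i < Suc q \<Longrightarrow> j < Suc q \<Longrightarrow> (\<Sum>c<n. u i c * W j c) = (if i = j then G else 0)"
    unfolding G_def W_def by (rule W_contract[OF B])
  have "comp n (Pten n (Suc q) A B) (Pten n (Suc q) A B) a b
      = (\<Sum>c<n. (f * (\<Sum>i<Suc q. u i a * W i c)) * (f * (\<Sum>j<Suc q. u j c * W j b)))"
    unfolding comp_def using a P by simp
  also have "\<dots> = f * f * (\<Sum>i<Suc q. \<Sum>j<Suc q. u i a * W j b * (\<Sum>c<n. u j c * W i c))"
  proof -
    define N where "N = {..<Suc q}"
    have "(\<Sum>c<n. (f * (\<Sum>i\<in>N. u i a * W i c)) * (f * (\<Sum>j\<in>N. u j c * W j b)))
        = (\<Sum>c<n. f * f * (\<Sum>i\<in>N. \<Sum>j\<in>N. (u i a * W i c) * (u j c * W j b)))"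
      by (simp add: sum_product mult_ac)
    also have "\<dots> = f * f * (\<Sum>c<n. \<Sum>i\<in>N. \<Sum>j\<in>N. (u i a * W i c) * (u j c * W j b))"
      by (simp add: sum_distrib_left)
    also have "\<dots> = f * f * (\<Sum>i\<in>N. \<Sum>c<n. \<Sum>j\<in>N. (u i a * W i c) * (u j c * W j b))"
      by (subst sum.swap) simp
    also have "\<dots> = f * f * (\<Sum>i\<in>N. \<Sum>j\<in>N. \<Sum>c<n. (u i a * W i c) * (u j c * W j b))"
      by (subst (2) sum.swap) simp
    also have "\<dots> = f * f * (\<Sum>i\<in>N. \<Sum>j\<in>N. u i a * W j b * (\<Sum>c<n. u j c * W i c))"
      by (simp add: sum_distrib_left mult_ac)
    finally show ?thesis unfolding N_def .
  qed
  also have "\<dots> = f * f * (\<Sum>i<Suc q. u i a * W i b * G)"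
  proof -
    have "(\<Sum>j<Suc q. u i a * W j b * (\<Sum>c<n. u j c * W i c)) = u i a * W i b * G" if i: "i < Suc q" for i
    proof -
      have "(\<Sum>j<Suc q. u i a * W j b * (\<Sum>c<n. u j c * W i c))
          = (\<Sum>j<Suc q. if j = i then u i a * W j b * G else 0)"
        by (rule sum.cong[OF refl]) (simp add: D i)
      also have "\<dots> = u i a * W i b * G" using i by (simp add: sum.delta)
      finally show ?thesis .
    qed
    then show ?thesis by (simp del: sum.lessThan_Suc)
  qed
  also have "\<dots> = f * G * Pten n (Suc q) A B a b"
    using P[OF a] by (simp del: sum.lessThan_Suc add: sum_distrib_left sum_distrib_right mult_ac)
  finally have 1: "comp n (Pten n (Suc q) A B) (Pten n (Suc q) A B) a b = f * G * Pten n (Suc q) A B a b" .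
  have "tr n (Pten n (Suc q) A B) = (\<Sum>c<n. f * (\<Sum>j<Suc q. u j c * W j c))"
    unfolding tr_def using P by simp
  also have "\<dots> = f * (\<Sum>j<Suc q. \<Sum>c<n. u j c * W j c)"
    by (simp del: sum.lessThan_Suc add: sum_distrib_left) (rule sum.swap)
  also have "\<dots> = f * of_nat (Suc q) * G"
    by (simp del: sum.lessThan_Suc of_nat_Suc add: D)
  finally have 2: "tr n (Pten n (Suc q) A B) = f * of_nat (Suc q) * G" .
  show ?thesis using 1 2 by (simp del: of_nat_Suc)
qed

lemma delta_sum_l: "a < n \<Longrightarrow> (\<Sum>c<n. delta a c * Y c) = (Y a :: 'k::field)"
proof -
  assume a: "a < n"
  have "(\<Sum>c<n. delta a c * Y c) = (\<Sum>c<n. if a = c then Y c else 0)"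
    by (rule sum.cong) (auto simp: delta_def)
  then show ?thesis using a by (simp add: sum.delta)
qed

lemma delta_sum_r: "b < n \<Longrightarrow> (\<Sum>c<n. Y c * delta c b) = (Y b :: 'k::field)"
proof -
  assume b: "b < n"
  have "(\<Sum>c<n. Y c * delta c b) = (\<Sum>c<n. if c = b then Y c else 0)"
    by (rule sum.cong) (auto simp: delta_def)
  then show ?thesis using b by (simp add: sum.delta')
qed

lemma comp_shift:
  fixes X :: "nat \<Rightarrow> nat \<Rightarrow> 'k::field"
  assumes "a < n" "b < n"
  shows "comp n (\<lambda>x y. X x y - s * delta x y) (\<lambda>x y. X x y - s * delta x y) a b
       = comp n X X a b - 2 * s * X a b + s\<^sup>2 * delta a b"
proof -
  have e: "(X a c - s * delta a c) * (X c b - s * delta c b) = X a c * X c b - s * (delta a c * X c b)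
     - s * (X a c * delta c b) + s\<^sup>2 * (delta a c * delta c b)" for c
    by (simp add: algebra_simps power2_eq_square)
  have "comp n (\<lambda>x y. X x y - s * delta x y) (\<lambda>x y. X x y - s * delta x y) a b
     = (\<Sum>c<n. X a c * X c b) - s * (\<Sum>c<n. delta a c * X c b)
         - s * (\<Sum>c<n. X a c * delta c b) + s\<^sup>2 * (\<Sum>c<n. delta a c * delta c b)"
    unfolding comp_def e
    by (simp add: sum.distrib sum_subtractf sum_distrib_left)
  also have "\<dots> = comp n X X a b - 2 * s * X a b + s\<^sup>2 * delta a b"
    using assms by (simp add: comp_def delta_sum_l delta_sum_r)
  finally show ?thesis .
qed

lemma tr_shift:
  fixes X :: "nat \<Rightarrow> nat \<Rightarrow> 'k::field"
  shows "tr n (\<lambda>x y. X x y - s * delta x y) = tr n X - s * of_nat n"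
  unfolding tr_def delta_def by (simp add: sum_subtractf)

theorem theorem3:
  fixes A B :: "nat list \<Rightarrow> 'k::field_char_0" and n p :: nat
  assumes "p \<ge> 1"
    and "is_pform n p A" and "is_pform n p B"
    and "simple_pform n p A"
  shows "(\<forall>a<n. \<forall>b<n. comp n (Tten n p A B) (Tten n p A B) a b
             = (tr n (Pten n p A B))\<^sup>2 / (2 * of_nat p)\<^sup>2 * delta a b)
       \<and> (n \<noteq> 2 * p \<longrightarrow> (\<forall>a<n. \<forall>b<n. comp n (Tten n p A B) (Tten n p A B) a b
             = (tr n (Tten n p A B))\<^sup>2 / (of_nat n - 2 * of_nat p)\<^sup>2 * delta a b))"
proof -
  obtain q where pq: "p = Suc q" using assms(1) by (cases p) auto
  obtain u where u: "\<forall>is \<in> idx n p.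
        A is = (1 / of_nat (fact p)) *
          (\<Sum>\<sigma> \<in> {\<sigma>. \<sigma> permutes {..<p}}. of_int (sign \<sigma>) * (\<Prod>k<p. u (\<sigma> k) (is ! k)))"
    using assms(4) unfolding simple_pform_def by blast
  let ?P = "Pten n p A B"
  define t where "t = tr n ?P"
  define s :: 'k where "s = t / (2 * of_nat p)"
  have p0: "(of_nat p :: 'k) \<noteq> 0" using pq by (simp only: of_nat_eq_0_iff)
  have PP: "comp n ?P ?P a b = t / of_nat p * ?P a b" if "a < n" for a b
    using PP[OF assms(3)[unfolded pq] u[unfolded pq] that] unfolding t_def pq .
  have T: "Tten n p A B = (\<lambda>x y. ?P x y - s * delta x y)"
    by (simp add: fun_eq_iff Tten_def s_def t_def)
  have 1: "comp n (Tten n p A B) (Tten n p A B) a b = s\<^sup>2 * delta a b" if "a < n" "b < n" for a b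
  proof -
    have "comp n (Tten n p A B) (Tten n p A B) a b = t / of_nat p * ?P a b - 2 * s * ?P a b + s\<^sup>2 * delta a b"
      unfolding T comp_shift[OF that] PP[OF that(1)] ..
    also have "\<dots> = s\<^sup>2 * delta a b" using p0 by (simp add: s_def)
    finally show ?thesis .
  qed
  have s2: "s\<^sup>2 = t\<^sup>2 / (2 * of_nat p)\<^sup>2" by (simp add: s_def power_divide)
  have 2: "s\<^sup>2 = (tr n (Tten n p A B))\<^sup>2 / (of_nat n - 2 * of_nat p)\<^sup>2" if "n \<noteq> 2 * p"
  proof -
    have ne: "(of_nat n :: 'k) - 2 * of_nat p \<noteq> 0"
    proof
      assume "(of_nat n :: 'k) - 2 * of_nat p = 0"
      then have "(of_nat n :: 'k) = of_nat (2 * p)" by simp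
      then show False using that by (simp only: of_nat_eq_iff)
    qed
    have "tr n (Tten n p A B) = t - s * of_nat n" unfolding T tr_shift t_def ..
    also have "\<dots> = - s * (of_nat n - 2 * of_nat p)" using p0 by (simp add: s_def field_simps)
    finally have "tr n (Tten n p A B) = - s * (of_nat n - 2 * of_nat p)" .
    then show ?thesis using ne by (simp add: power_mult_distrib)
  qed
  show ?thesis
  proof (intro conjI allI impI)
    fix a b assume ab: "a < n" "b < n"
    show "comp n (Tten n p A B) (Tten n p A B) a b = (tr n ?P)\<^sup>2 / (2 * of_nat p)\<^sup>2 * delta a b"
      unfolding 1[OF ab] s2 t_def ..
  next
    fix a b assume ne: "n \<noteq> 2 * p" and ab: "a < n" "b < n"
    show "comp n (Tten n p A B) (Tten n p A B) a b
       = (tr n (Tten n p A B))\<^sup>2 / (of_nat n - 2 * of_nat p)\<^sup>2 * delta a b"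
      unfolding 1[OF ab] 2[OF ne] ..
  qed
qed
end
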